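(* Let $m,n\ge 1$ and let $\lambda=n^m$ be the rectangular shape with $m$ rows, each of length $n$. Let $\rho=\{\rho_{i,j}\}_{1\le i\le m,\,1\le j\le n}$ be any density on $\lambda$, and define the rotated density $r(\rho)$ by $r(\rho)_{i,j}=\rho_{m+1-i,\,n+1-j}$. Then $|\mathrm{SVT}(\lambda,\rho)|=|\mathrm{SVT}(\lambda,r(\rho))|$.
   Context: A Young diagram of shape $\lambda=(\lambda_1\ge\lambda_2\ge\dots\ge\lambda_m)$ is a left-justified array of cells with $\lambda_i$ cells in row $i$; cell $(i,j)$ is in row $i$ (numbered from the top) and column $j$ (numbered from the left). A density on $\lambda$ is an assignment of a nonnegative integer $\rho_{i,j}$ to every cell $(i,j)$; let $N=\sum_{i,j}\rho_{i,j}$. A standard set-valued Young tableau of shape $\lambda$ and density $\rho$ is an assignment of a set $S_{i,j}$ with $|S_{i,j}|=\rho_{i,j}$ to each cell, such that the sets $S_{i,j}$ partition $[N]=\{1,\dots,N\}$, and such that every element of $S_{i,j}$ is smaller than every element of $S_{i,j+1}$ and every element of $S_{i+1,j}$ whenever those cells exist (conditions involving an empty set are vacuous). $\mathrm{SVT}(\lambda,\rho)$ denotes the set of all such tableaux. *)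

theory Defs
  imports Main
begin

definition rect_cells :: "nat \<Rightarrow> nat \<Rightarrow> (nat \<times> nat) set" where
  "rect_cells m n = {1..m} \<times> {1..n}"

definition density_total :: "nat \<Rightarrow> nat \<Rightarrow> (nat \<Rightarrow> nat \<Rightarrow> nat) \<Rightarrow> nat" where
  "density_total m n rho = (\<Sum>(i,j)\<in>rect_cells m n. rho i j)"

text \<open>A tableau assigns a set of positive integers to each cell; to obtain a finite
  set of tableaux, cells outside the shape are assigned the empty set.\<close>
definition SVT_rect :: "nat \<Rightarrow> nat \<Rightarrow> (nat \<Rightarrow> nat \<Rightarrow> nat) \<Rightarrow> (nat \<times> nat \<Rightarrow> nat set) set" where
  "SVT_rect m n rho = {S.
     (\<forall>c. c \<notin> rect_cells m n \<longrightarrow> S c = {}) \<and>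
     (\<forall>(i,j)\<in>rect_cells m n. finite (S (i,j)) \<and> card (S (i,j)) = rho i j) \<and>
     (\<forall>c\<in>rect_cells m n. \<forall>d\<in>rect_cells m n. c \<noteq> d \<longrightarrow> S c \<inter> S d = {}) \<and>
     (\<Union>c\<in>rect_cells m n. S c) = {1..density_total m n rho} \<and>
     (\<forall>(i,j)\<in>rect_cells m n. (i,j+1) \<in> rect_cells m n \<longrightarrow>
         (\<forall>x\<in>S (i,j). \<forall>y\<in>S (i,j+1). x < y)) \<and>
     (\<forall>(i,j)\<in>rect_cells m n. (i+1,j) \<in> rect_cells m n \<longrightarrow>
         (\<forall>x\<in>S (i,j). \<forall>y\<in>S (i+1,j). x < y))}"

definition rotate_density :: "nat \<Rightarrow> nat \<Rightarrow> (nat \<Rightarrow> nat \<Rightarrow> nat) \<Rightarrow> (nat \<Rightarrow> nat \<Rightarrow> nat)" where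
  "rotate_density m n rho = (\<lambda>i j. rho (m + 1 - i) (n + 1 - j))"

end

theory Submission
  imports Defs
begin

definition rc :: "nat \<Rightarrow> nat \<Rightarrow> nat \<times> nat \<Rightarrow> nat \<times> nat" where
  "rc m n c = (m + 1 - fst c, n + 1 - snd c)"

definition phi :: "nat \<Rightarrow> nat \<Rightarrow> nat \<Rightarrow> (nat \<times> nat \<Rightarrow> nat set) \<Rightarrow> (nat \<times> nat \<Rightarrow> nat set)" where
  "phi m n N S = (\<lambda>c. if c \<in> rect_cells m n then (\<lambda>x. N + 1 - x) ` S (rc m n c) else {})"

lemma rc_in: "c \<in> rect_cells m n \<Longrightarrow> rc m n c \<in> rect_cells m n"
  by (cases c) (auto simp: rc_def rect_cells_def)

lemma rc_rc: "c \<in> rect_cells m n \<Longrightarrow> rc m n (rc m n c) = c"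
  by (cases c) (auto simp: rc_def rect_cells_def)

lemma rc_bij: "bij_betw (rc m n) (rect_cells m n) (rect_cells m n)"
  by (rule bij_betw_byWitness[where f'="rc m n"]) (auto simp: rc_in rc_rc)

lemma total_rot: "density_total m n (rotate_density m n rho) = density_total m n rho"
proof -
  have "density_total m n (rotate_density m n rho) = (\<Sum>c\<in>rect_cells m n. (\<lambda>(i,j). rho i j) (rc m n c))"
    unfolding density_total_def rotate_density_def rc_def
    by (rule sum.cong) auto
  also have "\<dots> = (\<Sum>c\<in>rect_cells m n. (\<lambda>(i,j). rho i j) c)"
    using sum.reindex_bij_betw[OF rc_bij, of "\<lambda>(i,j). rho i j" m n] by simp
  finally show ?thesis unfolding density_total_def by simp
qed

lemma SVT_cong:
  assumes "\<And>i j. (i,j) \<in> rect_cells m n \<Longrightarrow> rho i j = rho' i j"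
  shows "SVT_rect m n rho = SVT_rect m n rho'"
proof -
  have "density_total m n rho = density_total m n rho'"
    unfolding density_total_def by (rule sum.cong) (auto simp: assms)
  then show ?thesis unfolding SVT_rect_def using assms by (auto 0 0) (fastforce+)
qed

lemma rot_rot: "(i,j) \<in> rect_cells m n \<Longrightarrow>
   rotate_density m n (rotate_density m n rho) i j = rho i j"
  by (auto simp: rotate_density_def rect_cells_def)

lemma SVT_sub:
  assumes S: "S \<in> SVT_rect m n rho" and c: "c \<in> rect_cells m n"
  shows "S c \<subseteq> {1..density_total m n rho}"
  using S c unfolding SVT_rect_def by blast

lemma phi_in:
  assumes S: "S \<in> SVT_rect m n rho"
  shows "phi m n (density_total m n rho) S \<in> SVT_rect m n (rotate_density m n rho)"
proof -
  define N where "N = density_total m n rho"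
  define f where "f = (\<lambda>x::nat. N + 1 - x)"
  define R where "R = rect_cells m n"
  have injf: "inj_on f {1..N}" unfolding f_def inj_on_def by auto
  have sub: "\<And>c. c \<in> R \<Longrightarrow> S c \<subseteq> {1..N}" using SVT_sub[OF S] unfolding N_def R_def by blast
  have P: "phi m n N S = (\<lambda>c. if c \<in> R then f ` S (rc m n c) else {})"
    unfolding phi_def f_def R_def ..
  have S1: "\<forall>(i,j)\<in>R. finite (S (i,j)) \<and> card (S (i,j)) = rho i j"
   and S2: "\<forall>c\<in>R. \<forall>d\<in>R. c \<noteq> d \<longrightarrow> S c \<inter> S d = {}"
   and S3: "(\<Union>c\<in>R. S c) = {1..N}"
   and S4: "\<forall>(i,j)\<in>R. (i,j+1) \<in> R \<longrightarrow> (\<forall>x\<in>S (i,j). \<forall>y\<in>S (i,j+1). x < y)"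
   and S5: "\<forall>(i,j)\<in>R. (i+1,j) \<in> R \<longrightarrow> (\<forall>x\<in>S (i,j). \<forall>y\<in>S (i+1,j). x < y)"
    using S unfolding SVT_rect_def N_def R_def by auto
  let ?T = "\<lambda>c. if c \<in> R then f ` S (rc m n c) else {}"
  have A1: "\<forall>c. c \<notin> R \<longrightarrow> ?T c = {}" by auto
  have A2: "\<forall>(i,j)\<in>R. finite (?T (i,j)) \<and> card (?T (i,j)) = rotate_density m n rho i j"
  proof (clarify)
    fix i j assume ij: "(i,j) \<in> R"
    have r: "rc m n (i,j) \<in> R" using rc_in ij R_def by auto
    have "card (f ` S (rc m n (i,j))) = card (S (rc m n (i,j)))"
      by (rule card_image, rule inj_on_subset[OF injf sub[OF r]])
    also have "\<dots> = rotate_density m n rho i j"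
      using S1 r by (auto simp: rc_def rotate_density_def)
    finally show "finite (?T (i,j)) \<and> card (?T (i,j)) = rotate_density m n rho i j"
      using S1 r ij by (cases "rc m n (i,j)") auto
  qed
  have A3: "\<forall>c\<in>R. \<forall>d\<in>R. c \<noteq> d \<longrightarrow> ?T c \<inter> ?T d = {}"
  proof (intro ballI impI)
    fix c d assume c: "c \<in> R" and d: "d \<in> R" and cd: "c \<noteq> d"
    have rc: "rc m n c \<in> R" and rd: "rc m n d \<in> R" using rc_in c d R_def by auto
    have "rc m n c \<noteq> rc m n d" using rc_rc c d cd R_def by metis
    then have e: "S (rc m n c) \<inter> S (rc m n d) = {}" using S2 rc rd by blast
    have "f ` S (rc m n c) \<inter> f ` S (rc m n d) = f ` (S (rc m n c) \<inter> S (rc m n d))"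
      by (rule inj_on_image_Int[OF injf sub[OF rc] sub[OF rd], symmetric])
    then show "?T c \<inter> ?T d = {}" using e c d by simp
  qed
  have A4: "(\<Union>c\<in>R. ?T c) = {1..density_total m n (rotate_density m n rho)}"
  proof -
    have "(\<Union>c\<in>R. ?T c) = f ` (\<Union>c\<in>R. S (rc m n c))" by auto
    also have "(\<Union>c\<in>R. S (rc m n c)) = (\<Union>c\<in>rc m n ` R. S c)" by simp
    also have "rc m n ` R = R" using rc_bij R_def by (simp add: bij_betw_def)
    also have "f ` (\<Union>c\<in>R. S c) = {1..N}" unfolding S3 f_def
    proof
      show "(\<lambda>x. N + 1 - x) ` {1..N} \<subseteq> {1..N}" by auto
      show "{1..N} \<subseteq> (\<lambda>x. N + 1 - x) ` {1..N}"
      proof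
        fix x assume "x \<in> {1..N}"
        then show "x \<in> (\<lambda>x. N + 1 - x) ` {1..N}"
          by (intro image_eqI[where x="N+1-x"]) auto
      qed
    qed
    finally show ?thesis using total_rot N_def by simp
  qed
  have A5: "\<forall>(i,j)\<in>R. (i,j+1) \<in> R \<longrightarrow> (\<forall>x\<in>?T (i,j). \<forall>y\<in>?T (i,j+1). x < y)"
  proof (clarify)
    fix i j x y assume ij: "(i,j) \<in> R" and ij1: "(i,j+1) \<in> R"
      and x: "x \<in> ?T (i,j)" and y: "y \<in> ?T (i,j+1)"
    have c1: "(m+1-i, n-j) \<in> R" and c2: "(m+1-i, n-j+1) \<in> R"
      using ij ij1 by (auto simp: R_def rect_cells_def)
    have e1: "rc m n (i,j) = (m+1-i, n-j+1)" and e2: "rc m n (i,j+1) = (m+1-i, n-j)"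
      using ij1 by (auto simp: rc_def R_def rect_cells_def)
    obtain b where b: "b \<in> S (m+1-i, n-j+1)" "x = f b" using x ij e1 by auto
    obtain a where a: "a \<in> S (m+1-i, n-j)" "y = f a" using y ij1 e2 by auto
    have "a < b" using S4 c1 c2 a b by fastforce
    moreover have "b \<le> N" using sub[OF c2] b by auto
    ultimately show "x < y" using a b unfolding f_def by simp
  qed
  have A6: "\<forall>(i,j)\<in>R. (i+1,j) \<in> R \<longrightarrow> (\<forall>x\<in>?T (i,j). \<forall>y\<in>?T (i+1,j). x < y)"
  proof (clarify)
    fix i j x y assume ij: "(i,j) \<in> R" and ij1: "(i+1,j) \<in> R"
      and x: "x \<in> ?T (i,j)" and y: "y \<in> ?T (i+1,j)"
    have c1: "(m-i, n+1-j) \<in> R" and c2: "(m-i+1, n+1-j) \<in> R"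
      using ij ij1 by (auto simp: R_def rect_cells_def)
    have e1: "rc m n (i,j) = (m-i+1, n+1-j)" and e2: "rc m n (i+1,j) = (m-i, n+1-j)"
      using ij1 by (auto simp: rc_def R_def rect_cells_def)
    obtain b where b: "b \<in> S (m-i+1, n+1-j)" "x = f b" using x ij e1 by auto
    obtain a where a: "a \<in> S (m-i, n+1-j)" "y = f a" using y ij1 e2 by auto
    have "a < b" using S5 c1 c2 a b by fastforce
    moreover have "b \<le> N" using sub[OF c2] b by auto
    ultimately show "x < y" using a b unfolding f_def by simp
  qed
  show ?thesis unfolding N_def[symmetric] P SVT_rect_def
    using A1 A2 A3 A4 A5 A6 unfolding R_def by blast
qed

lemma phi_phi:
  assumes S: "S \<in> SVT_rect m n rho"
  shows "phi m n (density_total m n rho) (phi m n (density_total m n rho) S) = S"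
proof
  fix c
  define N where "N = density_total m n rho"
  show "phi m n (density_total m n rho) (phi m n (density_total m n rho) S) c = S c"
  proof (cases "c \<in> rect_cells m n")
    case True
    have r: "rc m n c \<in> rect_cells m n" using rc_in True by auto
    have sub: "S c \<subseteq> {1..N}" using SVT_sub[OF S True] N_def by simp
    have "(\<lambda>x. N + 1 - x) ` (\<lambda>x. N + 1 - x) ` S c = S c"
    proof -
      have "(\<lambda>x. N + 1 - x) ` (\<lambda>x. N + 1 - x) ` S c = (\<lambda>x. N + 1 - (N + 1 - x)) ` S c"
        by (simp add: image_image)
      also have "\<dots> = S c" proof -
        have "\<And>x. x \<in> S c \<Longrightarrow> N + 1 - (N + 1 - x) = x" using sub by force
        then show ?thesis by simp
      qed
      finally show ?thesis .
    qed
    then show ?thesis using True r rc_rc[OF True] unfolding phi_def N_def by simp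
  next
    case False
    have "\<forall>c. c \<notin> rect_cells m n \<longrightarrow> S c = {}" using S unfolding SVT_rect_def by simp
    then have "S c = {}" using False by blast
    then show ?thesis using False unfolding phi_def by simp
  qed
qed

theorem proposition1:
  fixes m n :: nat and rho :: "nat \<Rightarrow> nat \<Rightarrow> nat"
  assumes "m \<ge> 1" and "n \<ge> 1"
  shows "card (SVT_rect m n rho) = card (SVT_rect m n (rotate_density m n rho))"
proof -
  define N where "N = density_total m n rho"
  have eq: "SVT_rect m n (rotate_density m n (rotate_density m n rho)) = SVT_rect m n rho"
    by (rule SVT_cong) (rule rot_rot)
  have N': "density_total m n (rotate_density m n rho) = N" using total_rot N_def by simp
  have "bij_betw (phi m n N) (SVT_rect m n rho) (SVT_rect m n (rotate_density m n rho))"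
  proof (rule bij_betw_byWitness[where f'="phi m n N"])
    show "\<forall>a\<in>SVT_rect m n rho. phi m n N (phi m n N a) = a" using phi_phi[of _ m n rho] unfolding N_def by simp
    show "\<forall>a\<in>SVT_rect m n (rotate_density m n rho). phi m n N (phi m n N a) = a"
      using phi_phi[of _ m n "rotate_density m n rho"] unfolding N' by simp
    show "phi m n N ` SVT_rect m n rho \<subseteq> SVT_rect m n (rotate_density m n rho)"
      using phi_in[of _ m n rho] unfolding N_def by auto
    show "phi m n N ` SVT_rect m n (rotate_density m n rho) \<subseteq> SVT_rect m n rho"
      using phi_in[of _ m n "rotate_density m n rho"] unfolding N' eq by auto
  qed
  then show ?thesis by (rule bij_betw_same_card)
qed

end
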